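(* Let $M\in\mathbb R^{n\times n}$ be sufficient, $Q\in\mathbb R^{n\times d}$, $q\in\mathbb R^n$, $S=\{Q\theta+q:\theta\in\mathbb R^d\}$, and $S^\epsilon=S+\boldsymbol\epsilon$. There exists $\delta>0$ such that $S^\epsilon$ lies in general position for every $\epsilon\in(0,\delta)$.
   Context: $\boldsymbol\epsilon=(\epsilon,\epsilon^2,\dots,\epsilon^n)^T$. Let $A=[\,I\;\;-M\,]\in\mathbb R^{n\times 2n}$, columns indexed by $\{1,\dots,2n\}$; $A_{\cdot J}$ is the submatrix of columns indexed by $J$. Complementary index: $\bar i=i+n$ if $i\le n$, $\bar i=i-n$ if $i>n$. A set $J$ is complementary if $i\in J\Rightarrow\bar i\notin J$. A complementary basis is a complementary set $B$ with $|B|=n$ and $A_{\cdot B}$ invertible. Complementary cone: $\mathcal C(J)=\{A_{\cdot J}\lambda:\lambda\ge0\}$. An affine subspace $T$ lies in general position if for every complementary basis $B$: $T\cap\mathcal C(B)\neq\emptyset$ implies $T\cap\operatorname{int}\mathcal C(B)\neq\emptyset$. $M$ is column sufficient if $[z_i(Mz)_i\le 0\ \forall i]\Rightarrow[z_i(Mz)_i=0\ \forall i]$; row sufficient if $M^T$ is column sufficient; sufficient if both. *)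

theory Defs
  imports "HOL-Analysis.Analysis"
begin

text \<open>Column indices of A = [I, -M]: Inl i is column i (1 <= i <= n), Inr i is column i+n.
  The complement of Inl i is Inr i and vice versa.\<close>

definition column_sufficient :: "real^'n^'n \<Rightarrow> bool" where
  "column_sufficient M \<longleftrightarrow>
     (\<forall>z::real^'n. (\<forall>i. z$i * (M *v z)$i \<le> 0) \<longrightarrow> (\<forall>i. z$i * (M *v z)$i = 0))"

definition row_sufficient :: "real^'n^'n \<Rightarrow> bool" where
  "row_sufficient M \<longleftrightarrow> column_sufficient (transpose M)"

definition sufficient :: "real^'n^'n \<Rightarrow> bool" where
  "sufficient M \<longleftrightarrow> column_sufficient M \<and> row_sufficient M"

definition Acol :: "real^'n^'n \<Rightarrow> 'n + 'n \<Rightarrow> real^'n" where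
  "Acol M k = (case k of Inl i \<Rightarrow> axis i 1 | Inr i \<Rightarrow> - column i M)"

definition cbar :: "'n + 'n \<Rightarrow> 'n + 'n" where
  "cbar k = (case k of Inl i \<Rightarrow> Inr i | Inr i \<Rightarrow> Inl i)"

definition complementary :: "('n + 'n) set \<Rightarrow> bool" where
  "complementary J \<longleftrightarrow> (\<forall>k\<in>J. cbar k \<notin> J)"

text \<open>Submatrix A_B for a complementary set B of size n: B contains exactly one of
  Inl j, Inr j for each j, and column j of the (reordered) submatrix is that column of A.
  Reordering columns does not affect invertibility.\<close>
definition Asub :: "real^'n^'n \<Rightarrow> ('n + 'n) set \<Rightarrow> real^'n^'n" where
  "Asub M B = (\<chi> r c. Acol M (if Inl c \<in> B then Inl c else Inr c) $ r)"

definition comp_basis :: "real^'n^'n \<Rightarrow> ('n + 'n) set \<Rightarrow> bool" where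
  "comp_basis M B \<longleftrightarrow> complementary B \<and> card B = CARD('n) \<and> invertible (Asub M B)"

definition comp_cone :: "real^'n^'n \<Rightarrow> ('n + 'n) set \<Rightarrow> (real^'n) set" where
  "comp_cone M J = {(\<Sum>j\<in>J. l j *\<^sub>R Acol M j) | l. \<forall>j\<in>J. l j \<ge> 0}"

definition general_position :: "real^'n^'n \<Rightarrow> (real^'n) set \<Rightarrow> bool" where
  "general_position M T \<longleftrightarrow>
     (\<forall>B. comp_basis M B \<longrightarrow> T \<inter> comp_cone M B \<noteq> {} \<longrightarrow> T \<inter> interior (comp_cone M B) \<noteq> {})"

text \<open>The vector (eps, eps^2, ..., eps^n), indices ordered by the wellorder on 'n.\<close>
definition eps_vec :: "real \<Rightarrow> real^'n::{finite,wellorder}" where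
  "eps_vec e = (\<chi> i. e ^ (card {j. j < i} + 1))"

end

theory Submission imports Defs "HOL-Computational_Algebra.Polynomial" begin

lemma rank_inj: "inj (\<lambda>i::'n::{finite,wellorder}. card {j. j < i} + 1)"
proof (rule injI)
  fix a b :: 'n assume h: "card {j. j < a} + 1 = card {j. j < b} + 1"
  have *: "card {j. j < x} < card {j. j < y}" if "x < y" for x y :: 'n
  proof -
    have "{j. j < x} \<subset> {j. j < y}" using that by auto
    then show ?thesis by (simp add: psubset_card_mono)
  qed
  show "a = b"
  proof (rule ccontr)
    assume "a \<noteq> b"
    then have "a < b \<or> b < a" by auto
    then show False using * h by fastforce
  qed
qed

lemma eps_roots_finite:
  fixes c :: "real^'n::{finite,wellorder}"
  assumes "c \<noteq> 0"
  shows "finite {e. c0 + inner c (eps_vec e) = 0}"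
proof -
  define r where "r = (\<lambda>i::'n. card {j. j < i} + 1)"
  have rinj: "inj r" unfolding r_def by (rule rank_inj)
  define p where "p = [:c0:] + (\<Sum>i\<in>UNIV. monom (c$i) (r i))"
  have pe: "poly p e = c0 + inner c (eps_vec e)" for e
    by (simp add: p_def poly_sum poly_monom inner_vec_def eps_vec_def r_def mult.commute)
  obtain i0 where i0: "c$i0 \<noteq> 0" using assms by (metis vec_eq_iff zero_index)
  have "coeff p (r i0) = c$i0"
  proof -
    have "coeff p (r i0) = coeff [:c0:] (r i0) + (\<Sum>i\<in>UNIV. if r i = r i0 then c$i else 0)"
      by (simp add: p_def coeff_sum)
    also have "coeff [:c0:] (r i0) = 0" by (simp add: r_def coeff_pCons split: nat.split)
    also have "(\<Sum>i\<in>UNIV. if r i = r i0 then c$i else 0) = (\<Sum>i\<in>UNIV. if i = i0 then c$i else 0)"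
      using rinj by (metis injD)
    finally show ?thesis by simp
  qed
  then have "p \<noteq> 0" using i0 by auto
  then have "finite {x. poly p x = 0}" by (rule poly_roots_finite)
  then show ?thesis using pe by simp
qed


lemma gordan:
  fixes G :: "real^'d^'n" and h :: "real^'n"
  assumes feas: "\<exists>\<theta>. \<forall>i. 0 \<le> (G*v\<theta> + h)$i"
    and nostrict: "\<not>(\<exists>\<theta>. \<forall>i. 0 < (G*v\<theta> + h)$i)"
  shows "\<exists>y. (\<forall>i. 0 \<le> y$i) \<and> y \<noteq> 0 \<and> (\<forall>\<theta>. inner y (G*v\<theta>) = 0) \<and> inner y h = 0"
proof -
  define S where "S = range (\<lambda>\<theta>. G*v\<theta> + h)"
  define T where "T = {x::real^'n. \<forall>i. 0 < x$i}"
  have cS: "convex S"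
    unfolding convex_def S_def
  proof (clarsimp)
    fix \<theta>1 \<theta>2 and u v :: real assume uv: "u + v = 1"
    have "u *\<^sub>R (G *v \<theta>1 + h) + v *\<^sub>R (G *v \<theta>2 + h) = G *v (u *\<^sub>R \<theta>1 + v *\<^sub>R \<theta>2) + (u+v) *\<^sub>R h"
      by (simp add: algebra_simps)
    then show "u *\<^sub>R (G *v \<theta>1 + h) + v *\<^sub>R (G *v \<theta>2 + h) \<in> range (\<lambda>\<theta>. G *v \<theta> + h)"
      using uv by auto
  qed
  have cT: "convex T"
    unfolding convex_def T_def
  proof (clarsimp)
    fix x y :: "real^'n" and u v :: real and i
    assume "\<forall>i. 0 < x $ i" "\<forall>i. 0 < y $ i" "0 \<le> u" "0 \<le> v" "u + v = 1"
    then show "0 < u * x $ i + v * y $ i"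
    proof (cases "u = 0")
      case True
      then show ?thesis using \<open>u+v=1\<close> \<open>\<forall>i. 0 < y $ i\<close> by simp
    next
      case False
      then have "0 < u * x $ i" using \<open>0 \<le> u\<close> \<open>\<forall>i. 0 < x $ i\<close> by simp
      moreover have "0 \<le> v * y $ i" using \<open>0 \<le> v\<close> \<open>\<forall>i. 0 < y $ i\<close> by (simp add: less_imp_le)
      ultimately show ?thesis by linarith
    qed
  qed
  have nS: "S \<noteq> {}" unfolding S_def by auto
  have nT: "T \<noteq> {}" 
  proof -
    have "(\<chi> j. (1::real)) \<in> T" unfolding T_def by simp
    then show ?thesis by blast
  qed
  have dST: "S \<inter> T = {}" using nostrict unfolding S_def T_def by blast
  obtain a b where a0: "a \<noteq> 0" and aS: "\<forall>x\<in>S. inner a x \<le> b" and aT: "\<forall>x\<in>T. inner a x \<ge> b"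
    using separating_hyperplane_sets[OF cS cT nS nT dST] by blast
  have lin: "inner a (G*v\<theta>) = 0" for \<theta>
  proof (rule ccontr)
    assume k: "inner a (G*v\<theta>) \<noteq> 0"
    define t where "t = (b - inner a h + 1) / inner a (G*v\<theta>)"
    have "inner a (G*v(t *\<^sub>R \<theta>) + h) \<le> b" using aS unfolding S_def by auto
    moreover have "inner a (G*v(t *\<^sub>R \<theta>) + h) = t * inner a (G*v\<theta>) + inner a h"
      by (simp add: algebra_simps inner_add_right)
    moreover have "t * inner a (G*v\<theta>) = b - inner a h + 1" using k unfolding t_def by simp
    ultimately show False by simp
  qed
  define one where "one = (\<chi> j::'n. (1::real))"
  define s where "s = inner a one"
  have pos: "0 \<le> a$i" for i
  proof (rule ccontr)
    assume ai: "\<not> 0 \<le> a$i"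
    define t where "t = 1 + (\<bar>s\<bar> + \<bar>b\<bar> + 1) / (- a$i)"
    have tpos: "t > 0" using ai unfolding t_def by (simp add: divide_nonneg_pos add_pos_nonneg)
    have "one + (t - 1) *\<^sub>R axis i 1 \<in> T"
      unfolding T_def one_def using tpos by (auto simp: axis_def)
    then have "inner a (one + (t - 1) *\<^sub>R axis i 1) \<ge> b" using aT by auto
    moreover have "inner a (one + (t - 1) *\<^sub>R axis i 1) = s + (t-1) * a$i"
      by (simp add: s_def inner_add_right inner_axis)
    moreover have "(t-1) * a$i = - (\<bar>s\<bar> + \<bar>b\<bar> + 1)" using ai unfolding t_def by simp
    ultimately show False by linarith
  qed
  have b0: "b \<le> 0"
  proof (rule ccontr)
    assume bp: "\<not> b \<le> 0"
    define t where "t = b / (2 * (\<bar>s\<bar> + 1))"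
    have tpos: "t > 0" using bp unfolding t_def by simp
    have "t *\<^sub>R one \<in> T" unfolding T_def one_def using tpos by auto
    then have "inner a (t *\<^sub>R one) \<ge> b" using aT by auto
    moreover have "inner a (t *\<^sub>R one) = t * s" by (simp add: s_def)
    moreover have "t * s < b"
    proof -
      have "t * s \<le> t * \<bar>s\<bar>" using tpos by (simp add: mult_left_mono)
      also have "\<dots> < t * (2 * (\<bar>s\<bar> + 1))" using tpos by (simp add: mult_strict_left_mono)
      also have "\<dots> = b" unfolding t_def by simp
      finally show ?thesis .
    qed
    ultimately show False by linarith
  qed
  obtain \<theta>0 where th0: "\<forall>i. 0 \<le> (G*v\<theta>0 + h)$i" using feas by blast
  have "inner a (G*v\<theta>0 + h) \<ge> 0"
    unfolding inner_vec_def using th0 pos by (simp add: sum_nonneg)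
  moreover have "inner a (G*v\<theta>0 + h) \<le> b" using aS unfolding S_def by auto
  moreover have "inner a (G*v\<theta>0 + h) = inner a h" using lin by (simp add: inner_add_right)
  ultimately have "inner a h = 0" using b0 by linarith
  then show ?thesis using pos a0 lin by blast
qed


definition NN :: "real^'d^'n \<Rightarrow> real^'n \<Rightarrow> bool" where
  "NN G y \<longleftrightarrow> (\<forall>\<theta>. inner y (G*v\<theta>) = 0)"
definition PP :: "real^'d^'n \<Rightarrow> real^'n \<Rightarrow> bool" where
  "PP G y \<longleftrightarrow> NN G y \<and> (\<forall>i. 0 \<le> y$i) \<and> y \<noteq> 0"
definition supp :: "real^'n \<Rightarrow> 'n set" where
  "supp y = {i. y$i \<noteq> 0}"
definition minimal :: "real^'d^'n \<Rightarrow> real^'n \<Rightarrow> bool" where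
  "minimal G y \<longleftrightarrow> PP G y \<and> \<not>(\<exists>z. PP G z \<and> supp z \<subset> supp y)"

lemma NN_diff: "NN G y \<Longrightarrow> NN G u \<Longrightarrow> NN G (y - t *\<^sub>R u)"
  unfolding NN_def by (simp add: inner_diff_left)

lemma NN_neg: "NN G u \<Longrightarrow> NN G (- u)"
  unfolding NN_def by simp

lemma uniq_pos:
  fixes y u :: "real^'n"
  assumes my: "minimal G y" and nu: "NN G u" and su: "supp u \<subseteq> supp y" and ex: "\<exists>i. u$i > 0"
  shows "\<exists>c. u = c *\<^sub>R y"
proof -
  define K where "K = {i. u$i > 0}"
  have Kne: "K \<noteq> {}" and Kf: "finite K" using ex unfolding K_def by auto
  define t where "t = Min ((\<lambda>i. y$i / u$i) ` K)"
  obtain i0 where i0K: "i0 \<in> K" and ti0: "t = y$i0 / u$i0"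
  proof -
    have "t \<in> (\<lambda>i. y$i / u$i) ` K" unfolding t_def using Kne Kf by (intro Min_in) auto
    then show ?thesis using that by blast
  qed
  have tle: "t \<le> y$i / u$i" if "i \<in> K" for i
    unfolding t_def using that Kf by simp
  have py: "PP G y" using my unfolding minimal_def by auto
  have ynn: "0 \<le> y$i" for i using py unfolding PP_def by auto
  have ny: "NN G y" using py unfolding PP_def by auto
  have "i0 \<in> supp u" using i0K unfolding K_def supp_def by auto
  then have "y$i0 \<noteq> 0" using su unfolding supp_def by auto
  then have yi0: "y$i0 > 0" using ynn[of i0] by auto
  have ui0: "u$i0 > 0" using i0K unfolding K_def by auto
  have tpos: "t > 0" using yi0 ui0 ti0 by simp
  define w where "w = y - t *\<^sub>R u"
  have wnn: "0 \<le> w$i" for i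
  proof (cases "i \<in> K")
    case True
    then have ui: "u$i > 0" unfolding K_def by auto
    have "t \<le> y$i / u$i" using tle True .
    then have "t * u$i \<le> y$i" using ui by (simp add: pos_le_divide_eq)
    then show ?thesis unfolding w_def by simp
  next
    case False
    then have "u$i \<le> 0" unfolding K_def by auto
    then have "t * u$i \<le> 0" using tpos by (simp add: mult_nonneg_nonpos)
    then show ?thesis unfolding w_def using ynn[of i] by simp
  qed
  have nw: "NN G w" unfolding w_def using NN_diff[OF ny nu] .
  have sw: "supp w \<subseteq> supp y"
  proof
    fix i assume "i \<in> supp w"
    then have "w$i \<noteq> 0" unfolding supp_def by auto
    show "i \<in> supp y"
    proof (rule ccontr)
      assume "i \<notin> supp y"
      then have "y$i = 0" unfolding supp_def by auto
      moreover then have "u$i = 0" using su \<open>i \<notin> supp y\<close> unfolding supp_def by auto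
      ultimately show False using \<open>w$i \<noteq> 0\<close> unfolding w_def by simp
    qed
  qed
  have "w$i0 = 0" unfolding w_def using ti0 ui0 by simp
  then have "i0 \<notin> supp w" unfolding supp_def by auto
  moreover have "i0 \<in> supp y" using yi0 unfolding supp_def by auto
  ultimately have "supp w \<subset> supp y" using sw by auto
  then have "\<not> PP G w" using my unfolding minimal_def by auto
  then have "w = 0" using nw wnn unfolding PP_def by auto
  then have "y = t *\<^sub>R u" unfolding w_def by simp
  then have "u = (1/t) *\<^sub>R y" using tpos by simp
  then show ?thesis by blast
qed

lemma uniq:
  fixes y u :: "real^'n"
  assumes my: "minimal G y" and nu: "NN G u" and su: "supp u \<subseteq> supp y"
  shows "\<exists>c. u = c *\<^sub>R y"
proof (cases "u = 0")
  case True then show ?thesis by (intro exI[of _ 0]) simp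
next
  case False
  then obtain i where "u$i \<noteq> 0" by (metis vec_eq_iff zero_index)
  show ?thesis
  proof (cases "u$i > 0")
    case True then show ?thesis using uniq_pos[OF my nu su] by blast
  next
    case False
    then have "(-u)$i > 0" using \<open>u$i \<noteq> 0\<close> by simp
    moreover have "supp (-u) \<subseteq> supp y" using su unfolding supp_def by auto
    ultimately obtain c where "- u = c *\<^sub>R y" using uniq_pos[OF my NN_neg[OF nu]] by blast
    then have "u = (-c) *\<^sub>R y" by (metis minus_minus scaleR_minus_left)
    then show ?thesis by blast
  qed
qed

lemma exists_minimal:
  fixes G :: "real^'d^'n" and h :: "real^'n"
  assumes Y: "PP G y0" "inner y0 h = 0"
    and F: "\<And>z. PP G z \<Longrightarrow> inner z h \<ge> 0"
  shows "\<exists>y. minimal G y \<and> inner y h = 0"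
proof -
  obtain y where yY: "PP G y \<and> inner y h = 0"
    and ymin: "\<forall>z. PP G z \<and> inner z h = 0 \<longrightarrow> card (supp y) \<le> card (supp z)"
    using ex_has_least_nat[of "\<lambda>y. PP G y \<and> inner y h = 0" y0 "\<lambda>y. card (supp y)"] Y by blast
  have "minimal G y"
    unfolding minimal_def
  proof (intro conjI notI)
    show "PP G y" using yY by auto
    assume "\<exists>z. PP G z \<and> supp z \<subset> supp y"
    then obtain z where pz: "PP G z" and sz: "supp z \<subset> supp y" by blast
    define K where "K = supp z"
    have Kne: "K \<noteq> {}" and Kf: "finite K"
      using pz unfolding K_def PP_def supp_def by (auto simp: vec_eq_iff)
    have zpos: "z$i > 0" if "i \<in> K" for i
    proof -
      have "z$i \<noteq> 0" using that unfolding K_def supp_def by simp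
      moreover have "0 \<le> z$i" using pz unfolding PP_def by auto
      ultimately show ?thesis by simp
    qed
    have ynn: "0 \<le> y$i" for i using yY unfolding PP_def by auto
    have ypos: "y$i > 0" if "i \<in> K" for i
    proof -
      have "i \<in> supp y" using sz that unfolding K_def by auto
      then have "y$i \<noteq> 0" unfolding supp_def by simp
      then show ?thesis using ynn[of i] by simp
    qed
    define t where "t = Min ((\<lambda>i. y$i / z$i) ` K)"
    obtain i0 where i0K: "i0 \<in> K" and ti0: "t = y$i0 / z$i0"
  proof -
      have "t \<in> (\<lambda>i. y$i / z$i) ` K" unfolding t_def using Kne Kf by (intro Min_in) auto
      then show ?thesis using that by blast
    qed
    have tle: "t \<le> y$i / z$i" if "i \<in> K" for i
      unfolding t_def using that Kf by simp
    have tpos: "t > 0" using ti0 ypos[OF i0K] zpos[OF i0K] by simp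
    define w where "w = y - t *\<^sub>R z"
    have wnn: "0 \<le> w$i" for i
    proof (cases "i \<in> K")
      case True
      have "t * z$i \<le> y$i" using tle[OF True] zpos[OF True] by (simp add: pos_le_divide_eq)
      then show ?thesis unfolding w_def by simp
    next
      case False
      then have "z$i = 0" unfolding K_def supp_def by auto
      then show ?thesis unfolding w_def using ynn[of i] by simp
    qed
    have nw: "NN G w" unfolding w_def
      using NN_diff yY pz unfolding PP_def by blast
    have "inner z h = 0"
    proof (cases "w = 0")
      case True
      then have "y = t *\<^sub>R z" unfolding w_def by simp
      then have "t * inner z h = 0" using yY by simp
      then show ?thesis using tpos by simp
    next
      case False
      then have "PP G w" using nw wnn unfolding PP_def by auto
      then have "inner w h \<ge> 0" by (rule F)
      moreover have "inner w h = inner y h - t * inner z h" unfolding w_def by (simp add: inner_diff_left)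
      ultimately have "t * inner z h \<le> 0" using yY by simp
      then have "inner z h \<le> 0" using tpos by (simp add: mult_le_0_iff)
      then show ?thesis using F[OF pz] by simp
    qed
    then have "card (supp y) \<le> card (supp z)" using ymin pz by blast
    moreover have "card (supp z) < card (supp y)" using sz by (simp add: psubset_card_mono)
    ultimately show False by simp
  qed
  then show ?thesis using yY by blast
qed


lemma core:
  fixes G :: "real^'d^'n::{finite,wellorder}" and H :: "real^'n::{finite,wellorder}^'n::{finite,wellorder}" and g :: "real^'n::{finite,wellorder}"
  assumes invH: "invertible H"
  shows "finite {e. (\<exists>\<theta>. \<forall>i. 0 \<le> (G*v\<theta> + (g + H*v eps_vec e))$i) \<and>
                   \<not>(\<exists>\<theta>. \<forall>i. 0 < (G*v\<theta> + (g + H*v eps_vec e))$i)}"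
proof -
  obtain H' where HH': "H ** H' = mat 1" using invH unfolding invertible_def by blast
  define Smin where "Smin = {S. \<exists>y. minimal G y \<and> supp y = S}"
  define ys where "ys S = (SOME y. minimal G y \<and> supp y = S)" for S
  have ysS: "minimal G (ys S) \<and> supp (ys S) = S" if "S \<in> Smin" for S
    using that unfolding Smin_def ys_def by (metis (mono_tags, lifting) mem_Collect_eq someI_ex)
  have fin1: "finite {e. inner (ys S) (g + H*v eps_vec e) = 0}" if "S \<in> Smin" for S
  proof -
    have "ys S \<noteq> 0" using ysS[OF that] unfolding minimal_def PP_def by auto
    have nz: "ys S v* H \<noteq> 0"
    proof
      assume "ys S v* H = 0"
      then have "(ys S v* H) v* H' = 0" by (simp add: vector_matrix_mult_def vec_eq_iff)
      then have "ys S = 0" by (simp add: vector_matrix_mul_assoc HH')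
      then show False using \<open>ys S \<noteq> 0\<close> by simp
    qed
    have "{e. inner (ys S) (g + H*v eps_vec e) = 0} = {e. inner (ys S) g + inner (ys S v* H) (eps_vec e) = 0}"
      by (simp add: inner_add_right dot_lmul_matrix)
    then show ?thesis using eps_roots_finite[OF nz] by simp
  qed
  have sub: "{e. (\<exists>\<theta>. \<forall>i. 0 \<le> (G*v\<theta> + (g + H*v eps_vec e))$i) \<and>
                   \<not>(\<exists>\<theta>. \<forall>i. 0 < (G*v\<theta> + (g + H*v eps_vec e))$i)}
        \<subseteq> (\<Union>S\<in>Smin. {e. inner (ys S) (g + H*v eps_vec e) = 0})"
  proof
    fix e assume "e \<in> {e. (\<exists>\<theta>. \<forall>i. 0 \<le> (G*v\<theta> + (g + H*v eps_vec e))$i) \<and>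
                   \<not>(\<exists>\<theta>. \<forall>i. 0 < (G*v\<theta> + (g + H*v eps_vec e))$i)}"
    then have feas: "\<exists>\<theta>. \<forall>i. 0 \<le> (G*v\<theta> + (g + H*v eps_vec e))$i"
      and ns: "\<not>(\<exists>\<theta>. \<forall>i. 0 < (G*v\<theta> + (g + H*v eps_vec e))$i)" by auto
    define h where "h = g + H*v eps_vec e"
    obtain y0 where y0: "(\<forall>i. 0 \<le> y0$i) \<and> y0 \<noteq> 0 \<and> (\<forall>\<theta>. inner y0 (G*v\<theta>) = 0) \<and> inner y0 h = 0"
      using gordan[OF feas ns] unfolding h_def by blast
    then have Py0: "PP G y0" "inner y0 h = 0" unfolding PP_def NN_def by auto
    obtain \<theta>0 where th0: "\<forall>i. 0 \<le> (G*v\<theta>0 + h)$i" using feas unfolding h_def by blast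
    have F: "inner z h \<ge> 0" if "PP G z" for z
    proof -
      have "inner z (G*v\<theta>0 + h) \<ge> 0"
        unfolding inner_vec_def using th0 that unfolding PP_def by (simp add: sum_nonneg)
      moreover have "inner z (G*v\<theta>0) = 0" using that unfolding PP_def NN_def by auto
      ultimately show ?thesis by (simp add: inner_add_right)
    qed
    obtain y where my: "minimal G y" and yh: "inner y h = 0"
      using exists_minimal[OF Py0 F] by blast
    define S where "S = supp y"
    have SS: "S \<in> Smin" unfolding Smin_def S_def using my by blast
    have "NN G y" using my unfolding minimal_def PP_def by auto
    then obtain c where c: "y = c *\<^sub>R ys S"
      using uniq[of G "ys S" y] ysS[OF SS] unfolding S_def by auto
    have "y \<noteq> 0" using my unfolding minimal_def PP_def by auto
    then have "c \<noteq> 0" using c by auto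
    have "c * inner (ys S) h = 0" using yh c by simp
    then have "inner (ys S) h = 0" using \<open>c \<noteq> 0\<close> by simp
    then show "e \<in> (\<Union>S\<in>Smin. {e. inner (ys S) (g + H*v eps_vec e) = 0})"
      using SS unfolding h_def by blast
  qed
  have "finite Smin" by simp
  then have "finite (\<Union>S\<in>Smin. {e. inner (ys S) (g + H*v eps_vec e) = 0})"
    using fin1 by blast
  then show ?thesis using sub finite_subset by blast
qed


definition sel :: "('n + 'n) set \<Rightarrow> 'n \<Rightarrow> 'n + 'n" where
  "sel B c = (if Inl c \<in> B then Inl c else Inr c)"
definition proj :: "'n + 'n \<Rightarrow> 'n" where
  "proj j = (case j of Inl c \<Rightarrow> c | Inr c \<Rightarrow> c)"

lemma sel_bij:
  fixes B :: "('n::finite + 'n) set"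
  assumes cB: "complementary B" and card: "card B = CARD('n)"
  shows "bij_betw (sel B) UNIV B"
proof -
  have injp: "inj_on proj B"
  proof (rule inj_onI)
    fix j j' assume jB: "j \<in> B" and j'B: "j' \<in> B" and pe: "proj j = proj j'"
    show "j = j'"
    proof (cases j; cases j')
      fix a b assume "j = Inl a" "j' = Inr b"
      then have "j' = cbar j" using pe unfolding proj_def cbar_def by simp
      then show ?thesis using cB jB j'B unfolding complementary_def by blast
    next
      fix a b assume "j = Inr a" "j' = Inl b"
      then have "j' = cbar j" using pe unfolding proj_def cbar_def by simp
      then show ?thesis using cB jB j'B unfolding complementary_def by blast
    qed (use pe in \<open>auto simp: proj_def\<close>)
  qed
  have "card (proj ` B) = CARD('n)" using card_image[OF injp] card by simp
  then have pB: "proj ` B = UNIV" by (simp add: card_subset_eq)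
  have selin: "sel B c \<in> B" for c
  proof -
    obtain j where "j \<in> B" "proj j = c" using pB by (metis UNIV_I imageE)
    then show ?thesis unfolding sel_def proj_def by (cases j) auto
  qed
  have inj: "inj (sel B)" by (rule injI) (auto simp: sel_def split: if_splits)
  have surj: "B \<subseteq> range (sel B)"
  proof
    fix j assume jB: "j \<in> B"
    show "j \<in> range (sel B)"
    proof (cases j)
      case (Inl c) then show ?thesis using jB by (metis rangeI sel_def)
    next
      case (Inr c)
      then have "Inl c \<notin> B" using cB jB unfolding complementary_def cbar_def by force
      then have "sel B c = j" using Inr unfolding sel_def by simp
      then show ?thesis by blast
    qed
  qed
  show ?thesis unfolding bij_betw_def using inj selin surj by blast
qed

lemma column_Asub: "column c (Asub M B) = Acol M (sel B c)"
  unfolding column_def Asub_def sel_def by (simp add: vec_eq_iff)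

lemma sum_Acol:
  fixes B :: "('n::finite + 'n) set"
  assumes cB: "complementary B" and card: "card B = CARD('n)"
  shows "(\<Sum>j\<in>B. l j *\<^sub>R Acol M j) = Asub M B *v (\<chi> c. l (sel B c))"
proof -
  have "(\<Sum>j\<in>B. l j *\<^sub>R Acol M j) = (\<Sum>c\<in>UNIV. l (sel B c) *\<^sub>R Acol M (sel B c))"
    using sum.reindex_bij_betw[OF sel_bij[OF cB card], of "\<lambda>j. l j *\<^sub>R Acol M j"] by simp
  also have "\<dots> = Asub M B *v (\<chi> c. l (sel B c))"
    by (simp add: matrix_mult_sum column_Asub scalar_mult_eq_scaleR)
  finally show ?thesis .
qed

lemma cone_eq:
  fixes B :: "('n::finite + 'n) set"
  assumes cB: "complementary B" and card: "card B = CARD('n)"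
  shows "comp_cone M B = {Asub M B *v w | w. \<forall>i. 0 \<le> w$i}"
proof
  show "comp_cone M B \<subseteq> {Asub M B *v w | w. \<forall>i. 0 \<le> w$i}"
  proof
    fix x assume "x \<in> comp_cone M B"
    then obtain l where x: "x = (\<Sum>j\<in>B. l j *\<^sub>R Acol M j)" and l: "\<forall>j\<in>B. l j \<ge> 0"
      unfolding comp_cone_def by blast
    have "\<forall>i. 0 \<le> (\<chi> c. l (sel B c))$i"
      using l bij_betwE[OF sel_bij[OF cB card]] by simp
    then show "x \<in> {Asub M B *v w | w. \<forall>i. 0 \<le> w$i}"
      using x sum_Acol[OF cB card] by blast
  qed
next
  show "{Asub M B *v w | w. \<forall>i. 0 \<le> w$i} \<subseteq> comp_cone M B"
  proof
    fix x assume "x \<in> {Asub M B *v w | w. \<forall>i. 0 \<le> w$i}"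
    then obtain w where x: "x = Asub M B *v w" and l: "\<forall>i. 0 \<le> w$i" by blast
    define l where "l j = w $ proj j" for j
    have "(\<chi> c. l (sel B c)) = w" unfolding l_def proj_def sel_def by (simp add: vec_eq_iff)
    then have "x = (\<Sum>j\<in>B. l j *\<^sub>R Acol M j)" using x sum_Acol[OF cB card, of l M] by simp
    moreover have "\<forall>j\<in>B. l j \<ge> 0" using l unfolding l_def by simp
    ultimately show "x \<in> comp_cone M B" unfolding comp_cone_def by blast
  qed
qed


lemma inv_props:
  assumes "invertible (A::real^'n^'n)"
  shows "A ** matrix_inv A = mat 1 \<and> matrix_inv A ** A = mat 1"
  using assms unfolding invertible_def matrix_inv_def by (rule someI_ex)

lemma inv_invertible:
  assumes "invertible (A::real^'n^'n)"
  shows "invertible (matrix_inv A)"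
  using inv_props[OF assms] unfolding invertible_def by blast

lemma open_pos:
  fixes H :: "real^'n^'n"
  shows "open {x. \<forall>i. 0 < (H *v x)$i}"
proof -
  have "{x. \<forall>i. 0 < (H *v x)$i} = (\<Inter>i\<in>UNIV. {x. 0 < (H *v x)$i})" by auto
  moreover have "open {x. 0 < (H *v x)$i}" for i
    by (intro open_Collect_less continuous_intros)
  ultimately show ?thesis by auto
qed

theorem mainTheorem10:
  fixes M :: "real^'n::{finite,wellorder}^'n::{finite,wellorder}"
    and Q :: "real^'d::finite^'n::{finite,wellorder}"
    and q :: "real^'n::{finite,wellorder}"
  assumes "sufficient M"
  shows "\<exists>\<delta>>0. \<forall>\<epsilon>. 0 < \<epsilon> \<and> \<epsilon> < \<delta> \<longrightarrow>
           general_position M {Q *v \<theta> + q + eps_vec \<epsilon> | \<theta>. True}"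
proof -
  define Hi where "Hi B = matrix_inv (Asub M B)" for B
  define bad where "bad B = {e. (\<exists>\<theta>. \<forall>i. 0 \<le> ((Hi B ** Q)*v\<theta> + (Hi B *v q + Hi B *v eps_vec e))$i) \<and>
                   \<not>(\<exists>\<theta>. \<forall>i. 0 < ((Hi B ** Q)*v\<theta> + (Hi B *v q + Hi B *v eps_vec e))$i)}" for B
  define Bad where "Bad = (\<Union>B\<in>{B. comp_basis M B}. bad B)"
  have "finite (bad B)" if "comp_basis M B" for B
  proof -
    have invA: "invertible (Asub M B)" using that unfolding comp_basis_def by simp
    show ?thesis unfolding bad_def Hi_def by (rule core[OF inv_invertible[OF invA]])
  qed
  then have finBad: "finite Bad" unfolding Bad_def by simp
  define \<delta> where "\<delta> = Min (insert 1 {e\<in>Bad. e > 0})"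
  have fin2: "finite (insert 1 {e\<in>Bad. e > 0})" using finBad by simp
  have dpos: "\<delta> > 0" unfolding \<delta>_def using fin2 by (subst Min_gr_iff) auto
  show ?thesis
  proof (intro exI[of _ \<delta>] conjI allI impI)
    show "\<delta> > 0" by (rule dpos)
    fix \<epsilon> :: real assume e: "0 < \<epsilon> \<and> \<epsilon> < \<delta>"
    have notbad: "\<epsilon> \<notin> Bad"
    proof
      assume "\<epsilon> \<in> Bad"
      then have "\<delta> \<le> \<epsilon>" unfolding \<delta>_def using fin2 e by (intro Min_le) auto
      then show False using e by simp
    qed
    define T where "T = {Q *v \<theta> + q + eps_vec \<epsilon> | \<theta>. True}"
    show "general_position M {Q *v \<theta> + q + eps_vec \<epsilon> | \<theta>. True}"
      unfolding general_position_def
    proof (intro allI impI)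
      fix B assume cb: "comp_basis M B"
      assume ne: "{Q *v \<theta> + q + eps_vec \<epsilon> | \<theta>. True} \<inter> comp_cone M B \<noteq> {}"
      have cB: "complementary B" and card: "card B = CARD('n)" and invA: "invertible (Asub M B)"
        using cb unfolding comp_basis_def by auto
      define A where "A = Asub M B"
      define H where "H = Hi B"
      have AH: "A ** H = mat 1" and HA: "H ** A = mat 1"
        using inv_props[OF invA] unfolding A_def H_def Hi_def by auto
      have cone: "comp_cone M B = {A *v w | w. \<forall>i. 0 \<le> w$i}"
        unfolding A_def by (rule cone_eq[OF cB card])
      have Hx: "H *v (Q *v \<theta> + q + eps_vec \<epsilon>) = (H ** Q)*v\<theta> + (H *v q + H *v eps_vec \<epsilon>)" for \<theta>
        by (simp add: matrix_vector_right_distrib matrix_vector_mul_assoc add.assoc)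
      obtain \<theta> w where x: "Q *v \<theta> + q + eps_vec \<epsilon> = A *v w" and w: "\<forall>i. 0 \<le> w$i"
        using ne unfolding cone by blast
      have "H *v (Q *v \<theta> + q + eps_vec \<epsilon>) = w"
        using x by (simp add: matrix_vector_mul_assoc HA)
      then have feas: "\<exists>\<theta>. \<forall>i. 0 \<le> ((H ** Q)*v\<theta> + (H *v q + H *v eps_vec \<epsilon>))$i"
        using w Hx by metis
      have "\<epsilon> \<notin> bad B" using notbad cb unfolding Bad_def by blast
      then obtain \<theta>' where th': "\<forall>i. 0 < ((H ** Q)*v\<theta>' + (H *v q + H *v eps_vec \<epsilon>))$i"
        using feas unfolding bad_def H_def by blast
      define x' where "x' = Q *v \<theta>' + q + eps_vec \<epsilon>"
      define U where "U = {x. \<forall>i. 0 < (H *v x)$i}"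
      have x'U: "x' \<in> U" unfolding U_def x'_def using th' Hx by simp
      have Usub: "U \<subseteq> comp_cone M B"
      proof
        fix x assume "x \<in> U"
        then have "\<forall>i. 0 \<le> (H *v x)$i" unfolding U_def by (simp add: less_imp_le)
        moreover have "x = A *v (H *v x)" by (simp add: matrix_vector_mul_assoc AH)
        ultimately show "x \<in> comp_cone M B" unfolding cone by blast
      qed
      have "x' \<in> interior (comp_cone M B)"
        using interior_maximal[OF Usub] open_pos[of H] x'U unfolding U_def by blast
      moreover have "x' \<in> {Q *v \<theta> + q + eps_vec \<epsilon> | \<theta>. True}" unfolding x'_def by blast
      ultimately show "{Q *v \<theta> + q + eps_vec \<epsilon> | \<theta>. True} \<inter> interior (comp_cone M B) \<noteq> {}" by blast
    qed
  qed
qed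

end
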